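(* Let $A\in\mathbb{C}^{n\times n}$ with $k=\mathrm{Ind}(A)$, and let $m\in\mathbb{N}=\{1,2,\dots\}$. Then: (a) $A^{\#_m}=(A^{\mathrm{cEP}})^{m+1}A^mP_{A^m}$; (b) $A^{\#_m}=(A^{\mathrm{WG}})^mA^{m-1}P_{A^m}$; (c) $AA^{\#_m}=(A^{\mathrm{cEP}})^mA^mP_{A^m}=A^{\mathrm{WG}_{m-1}}AP_{A^m}$; (d) $A^{\#_m}A=(A^{\mathrm{cEP}})^{m+1}A^mP_{A^m}A$; (e) $A^{\#_m}A^m=A^{\mathrm{WG}_m}A^m=(A^{\mathrm{cEP}})^{m+1}A^{2m}$; (f) for every $Y\in\mathbb{C}^{n\times n}$ with $YAY=Y$ and $\mathcal{R}(Y)=\mathcal{R}(A^k)$, one has $A^{\#_m}=YAA^{\#_m}$.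
   Context: For $A\in\mathbb{C}^{n\times n}$: $A^\dagger$ is the Moore–Penrose inverse, $\mathcal{R}(\cdot)$ and $\mathcal{N}(\cdot)$ denote column space and null space, $P_A=AA^\dagger$, and $A^0=I_n$. The index $\mathrm{Ind}(A)$ is the smallest nonnegative integer $k$ with $\mathcal{R}(A^k)=\mathcal{R}(A^{k+1})$. The core-EP inverse $A^{\mathrm{cEP}}$ is the unique $X\in\mathbb{C}^{n\times n}$ with $XAX=X$ and $\mathcal{R}(X)=\mathcal{R}(X^* )=\mathcal{R}(A^k)$, $k=\mathrm{Ind}(A)$. For an integer $j\ge 0$, the $j$-weak group inverse is $A^{\mathrm{WG}_j}:=(A^{\mathrm{cEP}})^{j+1}A^j$; the WG inverse is $A^{\mathrm{WG}}:=A^{\mathrm{WG}_1}=(A^{\mathrm{cEP}})^2A$. For $m\in\mathbb{N}$, the $m$-weak core inverse of $A$ is $A^{\#_m}:=A^{\mathrm{WG}_m}P_{A^m}$. *)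

theory Defs
  imports "HOL-Analysis.Analysis"
begin

type_synonym 'n cmat = "complex^'n^'n"

definition ctrans :: "'n::finite cmat \<Rightarrow> 'n cmat" where
  "ctrans A = (\<chi> i j. cnj (A $ j $ i))"

fun mpow :: "'n::finite cmat \<Rightarrow> nat \<Rightarrow> 'n cmat" where
  "mpow A 0 = mat 1"
| "mpow A (Suc k) = A ** mpow A k"

definition colsp :: "'n::finite cmat \<Rightarrow> (complex^'n) set" where
  "colsp A = range (\<lambda>x. A *v x)"

definition MP :: "'n::finite cmat \<Rightarrow> 'n cmat" where
  "MP A = (THE X. A ** X ** A = A \<and> X ** A ** X = X \<and>
                 ctrans (A ** X) = A ** X \<and> ctrans (X ** A) = X ** A)"

definition Pr :: "'n::finite cmat \<Rightarrow> 'n cmat" where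
  "Pr A = A ** MP A"

definition ind :: "'n::finite cmat \<Rightarrow> nat" where
  "ind A = (LEAST k. colsp (mpow A k) = colsp (mpow A (Suc k)))"

definition cEP :: "'n::finite cmat \<Rightarrow> 'n cmat" where
  "cEP A = (THE X. X ** A ** X = X \<and> colsp X = colsp (mpow A (ind A)) \<and>
                  colsp (ctrans X) = colsp (mpow A (ind A)))"

definition WGj :: "'n::finite cmat \<Rightarrow> nat \<Rightarrow> 'n cmat" where
  "WGj A j = mpow (cEP A) (j + 1) ** mpow A j"

definition WG :: "'n::finite cmat \<Rightarrow> 'n cmat" where
  "WG A = WGj A 1"

definition wcore :: "'n::finite cmat \<Rightarrow> nat \<Rightarrow> 'n cmat" where
  "wcore A m = WGj A m ** Pr (mpow A m)"

end

theory Submission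
  imports Defs
begin


lemma mpow_Suc2: "mpow A (Suc k) = mpow A k ** A"
  by (induction k) (simp_all add: matrix_mul_assoc)

lemma mpow_add: "mpow A (i + j) = mpow A i ** mpow A j"
  by (induction i) (simp_all add: matrix_mul_assoc)

lemma comm_mpow: "G ** A = A ** G \<Longrightarrow> G ** mpow A i = mpow A i ** G"
  by (induction i) (simp_all add: matrix_mul_assoc, metis matrix_mul_assoc)

lemma comm_mpow2: "G ** A = A ** G \<Longrightarrow> mpow G j ** mpow A i = mpow A i ** mpow G j"
proof (induction j)
  case 0 then show ?case by simp
next
  case (Suc j)
  have "mpow G (Suc j) ** mpow A i = G ** (mpow G j ** mpow A i)" by (simp add: matrix_mul_assoc)
  also have "\<dots> = G ** mpow A i ** mpow G j" using Suc by (simp add: matrix_mul_assoc)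
  also have "\<dots> = mpow A i ** G ** mpow G j" using comm_mpow[OF Suc.prems] by simp
  finally show ?case by (simp add: matrix_mul_assoc)
qed

lemma ctrans_mult: "ctrans (X ** Y) = ctrans Y ** ctrans (X::'n::finite cmat)"
  by (simp add: ctrans_def matrix_matrix_mult_def vec_eq_iff mult.commute)

lemma ctrans_ctrans[simp]: "ctrans (ctrans X) = X"
  by (simp add: ctrans_def vec_eq_iff)

lemma ctrans_diff: "ctrans (X - Y) = ctrans X - ctrans (Y::'n::finite cmat)"
  by (simp add: ctrans_def vec_eq_iff)

lemma mat_diff_ldistrib: "(X::'n::finite cmat) ** (Y - Z) = X ** Y - X ** Z"
  by (simp add: matrix_matrix_mult_def vec_eq_iff right_diff_distrib sum_subtractf)

lemma mat_diff_rdistrib: "((Y::'n::finite cmat) - Z) ** X = Y ** X - Z ** X"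
  by (simp add: matrix_matrix_mult_def vec_eq_iff left_diff_distrib sum_subtractf)

lemma mat_add_rdistrib: "((Y::'n::finite cmat) + Z) ** X = Y ** X + Z ** X"
  by (simp add: matrix_matrix_mult_def vec_eq_iff distrib_right sum.distrib)

lemma ctrans_zero:
  assumes "ctrans D ** D = (0::'n::finite cmat)"
  shows "D = 0"
proof -
  have "D $ i $ j = 0" for i j
  proof -
    have "(ctrans D ** D) $ j $ j = (\<Sum>l\<in>UNIV. cnj (D $ l $ j) * D $ l $ j)"
      by (simp add: ctrans_def matrix_matrix_mult_def)
    also have "\<dots> = complex_of_real (\<Sum>l\<in>UNIV. (cmod (D $ l $ j))\<^sup>2)"
      apply (simp only: of_real_sum complex_norm_square)
      apply (simp add: mult.commute)
      done
    finally have c: "(ctrans D ** D) $ j $ j = complex_of_real (\<Sum>l\<in>UNIV. (cmod (D $ l $ j))\<^sup>2)" .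
    have "(ctrans D ** D) $ j $ j = 0" using assms by simp
    then have "(\<Sum>l\<in>UNIV. (cmod (D $ l $ j))\<^sup>2) = 0" using c of_real_eq_0_iff by metis
    then have "\<forall>l\<in>UNIV. (cmod (D $ l $ j))\<^sup>2 = 0"
      by (subst sum_nonneg_eq_0_iff[symmetric]) auto
    then show ?thesis by simp
  qed
  then show ?thesis by (simp add: vec_eq_iff)
qed

lemma colsp_mult: "colsp (Y ** U) \<subseteq> colsp Y"
  by (auto simp: colsp_def matrix_vector_mul_assoc[symmetric])

lemma colsp_sub:
  assumes "colsp X \<subseteq> colsp (Y::'n::finite cmat)"
  shows "\<exists>U. X = Y ** U"
proof -
  have "\<forall>j. \<exists>v. Y *v v = X *v axis j 1" using assms unfolding colsp_def
    by (metis (mono_tags) image_iff rangeI subsetD)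
  then obtain f where f: "\<And>j. Y *v f j = X *v axis j 1" by metis
  define U where "U = (\<chi> i j. f j $ i)"
  have "X = Y ** U"
  proof -
    have "(Y ** U) $ i $ j = X $ i $ j" for i j
    proof -
      have "(Y ** U) $ i $ j = (Y *v f j) $ i"
        by (simp add: U_def matrix_matrix_mult_def matrix_vector_mult_def)
      also have "\<dots> = (X *v axis j 1) $ i" by (simp only: f)
      also have "\<dots> = X $ i $ j" by (simp add: matrix_vector_mult_def axis_def if_distrib if_distribR sum.delta' cong: if_cong)
      finally show ?thesis .
    qed
    then show ?thesis by (simp add: vec_eq_iff)
  qed
  then show ?thesis by blast
qed

lemma mat_sum_left: "finite S \<Longrightarrow> (C::'n::finite cmat) ** (\<Sum>i\<in>S. f i) = (\<Sum>i\<in>S. C ** f i)"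
  by (induction S rule: finite_induct) (simp_all add: matrix_add_ldistrib)

lemma mat_sum_right: "finite S \<Longrightarrow> (\<Sum>i\<in>S. (f i :: 'n::finite cmat)) ** (C::'n::finite cmat) = (\<Sum>i\<in>S. f i ** C)"
  by (induction S rule: finite_induct) (simp_all add: mat_add_rdistrib)


lemma mat_scaleR_right: "(X::'n::finite cmat) ** (a *\<^sub>R Y) = a *\<^sub>R (X ** Y)"
  by (simp add: matrix_matrix_mult_def vec_eq_iff scaleR_sum_right)

lemma mat_scaleR_left: "(a *\<^sub>R (X::'n::finite cmat)) ** Y = a *\<^sub>R (X ** Y)"
  by (simp add: matrix_matrix_mult_def vec_eq_iff scaleR_sum_right)

lemma C_comm: "C ** mpow C i = mpow C i ** C"
  using comm_mpow[of C C] by simp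

lemma poly_aux:
  fixes C :: "'n::finite cmat"
  shows "(\<exists>i<N. c i \<noteq> 0) \<Longrightarrow> mpow C t ** (\<Sum>i<N. c i *\<^sub>R mpow C i) = 0 \<Longrightarrow>
    \<exists>s G. mpow C s = mpow C (Suc s) ** G \<and> G ** C = C ** G"
proof (induction N arbitrary: c t)
  case 0 thus ?case by simp
next
  case (Suc N)
  define R where "R = (\<Sum>i<N. c (Suc i) *\<^sub>R mpow C i)"
  have RC: "R ** C = C ** R" unfolding R_def
    by (simp add: mat_sum_left mat_sum_right mat_scaleR_left mat_scaleR_right C_comm)
  have sum_eq: "(\<Sum>i<Suc N. c i *\<^sub>R mpow C i) = c 0 *\<^sub>R mat 1 + C ** R"
    unfolding R_def by (subst sum.lessThan_Suc_shift) (simp add: mat_sum_left mat_scaleR_right)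
  have eq: "mpow C t ** (c 0 *\<^sub>R mat 1 + C ** R) = 0" using Suc.prems(2) sum_eq by simp
  have eq2: "c 0 *\<^sub>R mpow C t + mpow C (Suc t) ** R = 0"
    using eq by (simp add: matrix_add_ldistrib mat_scaleR_right matrix_mul_assoc C_comm)
  show ?case
  proof (cases "c 0 = 0")
    case True
    then have "\<exists>i<N. (c \<circ> Suc) i \<noteq> 0" using Suc.prems(1)
      by (metis comp_apply less_Suc_eq_0_disj)
    moreover have "mpow C (Suc t) ** (\<Sum>i<N. (c \<circ> Suc) i *\<^sub>R mpow C i) = 0"
      using eq2 True by (simp add: R_def)
    ultimately show ?thesis using Suc.IH by blast
  next
    case False
    have "mpow C (Suc t) ** ((- 1 / c 0) *\<^sub>R R) = (- 1 / c 0) *\<^sub>R (mpow C (Suc t) ** R)"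
      by (rule mat_scaleR_right)
    also have "mpow C (Suc t) ** R = - (c 0 *\<^sub>R mpow C t)" using eq2
      by (simp add: add_eq_0_iff)
    finally have "mpow C t = mpow C (Suc t) ** ((- 1 / c 0) *\<^sub>R R)" using False by simp
    moreover have "((- 1 / c 0) *\<^sub>R R) ** C = C ** ((- 1 / c 0) *\<^sub>R R)"
      by (simp only: mat_scaleR_left mat_scaleR_right RC)
    ultimately show ?thesis by blast
  qed
qed

lemma poly_exists:
  fixes C :: "'n::finite cmat"
  shows "\<exists>s G. mpow C s = mpow C (Suc s) ** G \<and> G ** C = C ** G"
proof (cases "inj_on (mpow C) {..DIM('n cmat)}")
  case True
  let ?S = "mpow C ` {..DIM('n cmat)}"
  have fin: "finite ?S" by simp
  have card: "card ?S = Suc DIM('n cmat)" using True card_image by fastforce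
  have "dependent ?S" using independent_bound[of ?S] card by auto
  then obtain u where u: "\<exists>v\<in>?S. u v \<noteq> 0" "(\<Sum>v\<in>?S. u v *\<^sub>R v) = 0"
    using real_vector.dependent_finite[OF fin] by blast
  define c where "c i = u (mpow C i)" for i
  have "(\<Sum>i<Suc DIM('n cmat). c i *\<^sub>R mpow C i) = 0"
    using u(2) sum.reindex[OF True, of "\<lambda>v. u v *\<^sub>R v"] unfolding c_def lessThan_Suc_atMost by (simp add: comp_def)
  moreover have "\<exists>i<Suc DIM('n cmat). c i \<noteq> 0" using u(1) unfolding c_def by (force simp: less_Suc_eq_le)
  ultimately show ?thesis using poly_aux[where c=c and t=0 and C=C] by simp
next
  case False
  then obtain i j where ij: "i < j" "mpow C i = mpow C j"
    unfolding inj_on_def by (metis linorder_neqE_nat)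
  have "mpow C j = mpow C (Suc i) ** mpow C (j - Suc i)"
    using mpow_add[of C "Suc i" "j - Suc i"] ij(1) by simp
  then show ?thesis using ij C_comm by metis
qed



lemma herm_down:
  assumes h: "ctrans B = B" and z: "mpow B (Suc (Suc j)) ** K = (0::'n::finite cmat)"
  shows "mpow B (Suc j) ** K = 0"
proof -
  define W where "W = mpow B j ** K"
  have "B ** (B ** W) = 0" using z by (simp add: W_def matrix_mul_assoc)
  then have "ctrans (B ** W) ** (B ** W) = 0"
    by (simp add: ctrans_mult h matrix_mul_assoc[symmetric])
  then have "B ** W = 0" by (rule ctrans_zero)
  then show ?thesis by (simp add: W_def matrix_mul_assoc)
qed

lemma herm_one:
  assumes h: "ctrans B = B"
  shows "mpow B (Suc j) ** K = (0::'n::finite cmat) \<Longrightarrow> B ** K = 0"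
proof (induction j)
  case 0 then show ?case by simp
next
  case (Suc j) then show ?case using herm_down[OF h] by blast
qed

lemma g1_herm:
  fixes B :: "'n::finite cmat"
  assumes h: "ctrans B = B"
  shows "\<exists>G. B ** G ** B = B \<and> ctrans G = G"
proof -
  obtain s G where sG: "mpow B s = mpow B (Suc s) ** G" "G ** B = B ** G"
    using poly_exists by blast
  define K where "K = mat 1 - B ** G"
  have "mpow B s ** K = 0"
    using sG(1) by (simp add: K_def mat_diff_ldistrib matrix_mul_assoc mpow_Suc2[symmetric])
  then have BK: "B ** K = 0"
  proof (cases s)
    case 0
    then show ?thesis using \<open>mpow B s ** K = 0\<close> by simp
  next
    case (Suc j)
    then show ?thesis using \<open>mpow B s ** K = 0\<close> herm_one[OF h] by blast
  qed
  then have "B = B ** B ** G" by (simp add: K_def mat_diff_ldistrib matrix_mul_assoc)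
  then have BGB: "B ** G ** B = B" using sG(2) by (metis matrix_mul_assoc)
  define Gh where "Gh = G ** B ** ctrans G"
  have "B ** Gh ** B = B ** ctrans G ** B"
    using BGB by (simp add: Gh_def matrix_mul_assoc)
  also have "\<dots> = ctrans (B ** G ** B)" by (simp add: ctrans_mult h matrix_mul_assoc)
  also have "\<dots> = B" using BGB h by simp
  finally have "B ** Gh ** B = B" .
  moreover have "ctrans Gh = Gh" by (simp add: Gh_def ctrans_mult h matrix_mul_assoc)
  ultimately show ?thesis by blast
qed

lemma i13:
  fixes A :: "'n::finite cmat"
  shows "\<exists>Y. A ** Y ** A = A \<and> ctrans (A ** Y) = A ** Y"
proof -
  have hB: "ctrans (ctrans A ** A) = ctrans A ** A" by (simp add: ctrans_mult)
  obtain G where G: "(ctrans A ** A) ** G ** (ctrans A ** A) = ctrans A ** A" "ctrans G = G"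
    using g1_herm[OF hB] by blast
  have h: "ctrans A ** A ** G ** ctrans A ** A = ctrans A ** A" using G(1) by (simp add: matrix_mul_assoc)
  define D where "D = A ** G ** ctrans A ** A - A"
  have "ctrans D ** D = 0"
    unfolding D_def by (simp add: ctrans_diff ctrans_mult G(2) mat_diff_ldistrib mat_diff_rdistrib matrix_mul_assoc h)
  then have "D = 0" by (rule ctrans_zero)
  then have "A ** (G ** ctrans A) ** A = A" by (simp add: D_def matrix_mul_assoc)
  moreover have "ctrans (A ** (G ** ctrans A)) = A ** (G ** ctrans A)"
    by (simp add: ctrans_mult G(2) matrix_mul_assoc)
  ultimately show ?thesis by blast
qed

definition pen :: "'n::finite cmat \<Rightarrow> 'n cmat \<Rightarrow> bool" where
  "pen A X \<longleftrightarrow> A ** X ** A = A \<and> X ** A ** X = X \<and>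
                 ctrans (A ** X) = A ** X \<and> ctrans (X ** A) = X ** A"

lemma MP_exists: "\<exists>X. pen (A::'n::finite cmat) X"
proof -
  obtain Y where Y: "A ** Y ** A = A" "ctrans (A ** Y) = A ** Y" using i13 by blast
  obtain Z' where Z': "ctrans A ** Z' ** ctrans A = ctrans A" "ctrans (ctrans A ** Z') = ctrans A ** Z'"
    using i13 by blast
  define Z where "Z = ctrans Z'"
  have Z1: "A ** Z ** A = A"
    using arg_cong[OF Z'(1), of ctrans] by (simp add: Z_def ctrans_mult matrix_mul_assoc)
  have Z2: "ctrans (Z ** A) = Z ** A"
    using Z'(2) by (simp add: Z_def ctrans_mult)
  define X where "X = Z ** A ** Y"
  have "A ** X ** A = A" using Z1 Y(1) by (simp add: X_def matrix_mul_assoc)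
  moreover have "X ** A ** X = X"
  proof -
    have "X ** A ** X = Z ** (A ** Y ** A) ** Z ** A ** Y" by (simp add: X_def matrix_mul_assoc)
    also have "\<dots> = Z ** (A ** Z ** A) ** Y" using Y(1) by (simp add: matrix_mul_assoc)
    also have "\<dots> = X" using Z1 by (simp add: X_def)
    finally show ?thesis .
  qed
  moreover have "A ** X = A ** Y" using Z1 by (simp add: X_def matrix_mul_assoc)
  moreover have "X ** A = Z ** A" using Y(1) by (simp add: X_def matrix_mul_assoc[symmetric])
  ultimately have "pen A X" unfolding pen_def using Y(2) Z2 by simp
  then show ?thesis by blast
qed

lemma MP_unique:
  assumes X: "pen A X" and Y: "pen A (Y::'n::finite cmat)"
  shows "X = Y"
proof -
  have X1: "A ** X ** A = A" and X2: "X ** A ** X = X" and X3: "ctrans (A ** X) = A ** X"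
    and X4: "ctrans (X ** A) = X ** A" using X by (auto simp: pen_def)
  have Y1: "A ** Y ** A = A" and Y2: "Y ** A ** Y = Y" and Y3: "ctrans (A ** Y) = A ** Y"
    and Y4: "ctrans (Y ** A) = Y ** A" using Y by (auto simp: pen_def)
  have "ctrans A = ctrans ((A ** Y) ** A)" using Y1 by simp
  also have "\<dots> = ctrans A ** ctrans (A ** Y)" by (rule ctrans_mult)
  also have "\<dots> = ctrans A ** A ** Y" using Y3 by (simp add: matrix_mul_assoc)
  finally have cA1: "ctrans A = ctrans A ** A ** Y" .
  have "ctrans A = ctrans (A ** (X ** A))" using X1 by (simp add: matrix_mul_assoc)
  also have "\<dots> = ctrans (X ** A) ** ctrans A" by (rule ctrans_mult)
  also have "\<dots> = X ** A ** ctrans A" using X4 by simp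
  finally have cA2: "ctrans A = X ** A ** ctrans A" .
  have "X = X ** ctrans (A ** X)" using X2 X3 by (simp add: matrix_mul_assoc)
  also have "\<dots> = X ** ctrans X ** ctrans A" by (simp add: ctrans_mult matrix_mul_assoc)
  also have "\<dots> = X ** ctrans X ** (ctrans A ** A ** Y)" using cA1 by simp
  also have "\<dots> = X ** ctrans (A ** X) ** A ** Y" by (simp add: ctrans_mult matrix_mul_assoc)
  also have "\<dots> = X ** A ** Y" using X2 X3 by (simp add: matrix_mul_assoc)
  finally have e1: "X = X ** A ** Y" .
  have "Y = ctrans (Y ** A) ** Y" using Y2 Y4 by simp
  also have "\<dots> = ctrans A ** ctrans Y ** Y" by (simp add: ctrans_mult)
  also have "\<dots> = (X ** A ** ctrans A) ** ctrans Y ** Y" using cA2 by simp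
  also have "\<dots> = X ** A ** ctrans (Y ** A) ** Y" by (simp add: ctrans_mult matrix_mul_assoc)
  also have "\<dots> = X ** A ** Y" using Y2 Y4 by (simp add: matrix_mul_assoc[symmetric])
  finally show ?thesis using e1 by simp
qed

lemma MP_props: "pen A (MP (A::'n::finite cmat))"
proof -
  have "\<exists>!X. pen A X" using MP_exists MP_unique by blast
  then have "pen A (THE X. pen A X)" by (rule theI')
  then show ?thesis unfolding MP_def pen_def by simp
qed



lemma A_comm: "mpow A j ** mpow A i = mpow A i ** mpow A j"
  using comm_mpow2[of A A j i] by simp

lemma shift_lemma:
  fixes T :: "'n::finite cmat"
  assumes "T = A ** T ** G0" "K = T ** U" "G0 ** T = T ** G0" "G0 ** K = K ** G0"
  shows "K = A ** K ** G0"
proof -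
  have "K = (A ** T ** G0) ** U" using assms(1,2) by metis
  also have "\<dots> = (A ** (T ** G0)) ** U" by (simp only: matrix_mul_assoc)
  also have "\<dots> = (A ** (G0 ** T)) ** U" by (simp only: assms(3))
  also have "\<dots> = A ** G0 ** (T ** U)" by (simp only: matrix_mul_assoc)
  also have "\<dots> = A ** (G0 ** K)" by (simp only: assms(2)[symmetric] matrix_mul_assoc)
  also have "\<dots> = A ** K ** G0" by (simp only: assms(4) matrix_mul_assoc)
  finally show ?thesis .
qed

lemma ind_G:
  fixes A :: "'n::finite cmat"
  shows "\<exists>G. mpow A (ind A) = mpow A (Suc (ind A)) ** G \<and> G ** A = A ** G"
proof -
  obtain s G0 where sG: "mpow A s = mpow A (Suc s) ** G0" "G0 ** A = A ** G0"
    using poly_exists by blast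
  have "colsp (mpow A s) \<subseteq> colsp (mpow A (Suc s))" unfolding sG(1)[symmetric] by (subst sG(1)) (rule colsp_mult)
  moreover have "colsp (mpow A (Suc s)) \<subseteq> colsp (mpow A s)" unfolding mpow_Suc2 by (rule colsp_mult)
  ultimately have cs: "colsp (mpow A s) = colsp (mpow A (Suc s))" by blast
  define k where "k = ind A"
  have kle: "k \<le> s" unfolding k_def ind_def using cs by (rule Least_le)
  have ck: "colsp (mpow A k) = colsp (mpow A (Suc k))" unfolding k_def ind_def using cs by (rule LeastI)
  obtain H where H: "mpow A k = mpow A (Suc k) ** H" using colsp_sub ck by blast
  have "\<exists>Hj. mpow A k = mpow A (k + j) ** Hj" for j
  proof (induction j)
    case 0 show ?case by (rule exI[of _ "mat 1"]) simp
  next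
    case (Suc j)
    then obtain Hj where Hj: "mpow A k = mpow A (k + j) ** Hj" by blast
    have "mpow A k = A ** mpow A k ** H" using H by (simp add: matrix_mul_assoc)
    also have "\<dots> = mpow A (k + Suc j) ** (Hj ** H)" by (subst Hj) (simp add: matrix_mul_assoc)
    finally show ?case by blast
  qed
  then obtain U where U: "mpow A k = mpow A s ** U" using kle le_add_diff_inverse[OF kle] by metis
  have sG1': "mpow A s = A ** mpow A s ** G0"
    unfolding mpow.simps(2)[symmetric] by (rule sG(1))
  have "mpow A k = A ** mpow A k ** G0"
    by (rule shift_lemma[OF sG1' U comm_mpow[OF sG(2)] comm_mpow[OF sG(2)]])
  then show ?thesis using sG(2) k_def by auto
qed

lemma cEP_exists:
  fixes A :: "'n::finite cmat"
  shows "\<exists>X. X ** A ** X = X \<and> colsp X = colsp (mpow A (ind A)) \<and>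
                  colsp (ctrans X) = colsp (mpow A (ind A))"
proof -
  define k where "k = ind A"
  define M where "M = mpow A k"
  obtain G where G: "M = A ** M ** G" "G ** A = A ** G"
    using ind_G[of A] unfolding k_def[symmetric] M_def by auto
  have GM: "G ** M = M ** G" unfolding M_def using comm_mpow[OF G(2)] .
  have GkM: "mpow G j ** M = M ** mpow G j" for j unfolding M_def using comm_mpow2[OF G(2)] .
  have MA: "M ** A = A ** M" unfolding M_def using C_comm by metis
  have step: "mpow A (k + j) ** A ** G = mpow A (k + j)" for j
  proof -
    have kj: "mpow A (k + j) = mpow A j ** M" unfolding M_def mpow_add by (rule A_comm)
    have "mpow A (k + j) ** A ** G = mpow A j ** (M ** A ** G)"
      unfolding kj by (simp only: matrix_mul_assoc)
    also have "\<dots> = mpow A j ** M" using G(1) MA by simp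
    finally show ?thesis using kj by simp
  qed
  have i: "mpow A (k + j) ** mpow G j = M" for j
  proof (induction j)
    case 0 then show ?case by (simp add: M_def)
  next
    case (Suc j)
    have e: "mpow A (k + Suc j) = mpow A (k + j) ** A" by (simp only: add_Suc_right mpow_Suc2)
    have "mpow A (k + Suc j) ** mpow G (Suc j) = (mpow A (k + j) ** A ** G) ** mpow G j"
      unfolding e by (simp add: matrix_mul_assoc)
    also have "\<dots> = M" using step Suc by simp
    finally show ?case .
  qed
  define E where "E = M ** mpow G k"
  define D where "D = mpow G (Suc k) ** M"
  define P where "P = M ** MP M"
  have pM: "pen M (MP M)" by (rule MP_props)
  have EM: "E ** M = M"
  proof -
    have "E ** M = M ** (mpow G k ** M)"
      by (simp only: E_def matrix_mul_assoc)
    also have "\<dots> = mpow A (k + k) ** mpow G k"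
      unfolding mpow_add M_def[symmetric] by (simp only: GkM matrix_mul_assoc)
    finally have "E ** M = mpow A (k + k) ** mpow G k" .
    then show ?thesis using i by simp
  qed
  have AD: "A ** D = E"
  proof -
    have "A ** D = A ** (G ** (mpow G k ** M))"
      by (simp only: D_def mpow.simps matrix_mul_assoc)
    also have "\<dots> = A ** (G ** M ** mpow G k)"
      by (simp only: GkM matrix_mul_assoc)
    also have "\<dots> = (A ** M ** G) ** mpow G k"
      by (simp only: GM matrix_mul_assoc)
    finally have "A ** D = (A ** M ** G) ** mpow G k" .
    then show ?thesis using G(1) by (simp add: E_def)
  qed
  have DE: "D ** E = D"
  proof -
    have "D ** E = mpow G (Suc k) ** (M ** (M ** mpow G k))"
      by (simp only: D_def E_def matrix_mul_assoc)
    also have "M ** (M ** mpow G k) = E ** M"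
      by (simp only: E_def GkM matrix_mul_assoc[symmetric])
    finally have "D ** E = mpow G (Suc k) ** (E ** M)" .
    then show ?thesis using EM by (simp add: D_def)
  qed
  have PM: "P ** M = M" using pM by (simp add: pen_def P_def)
  have Ph: "ctrans P = P" using pM by (simp add: pen_def P_def)
  have PE: "P ** E = E" using PM by (simp add: E_def matrix_mul_assoc)
  have EP: "E ** P = P" using EM by (simp add: P_def matrix_mul_assoc)
  define X where "X = D ** P"
  have XAX: "X ** A ** X = X"
  proof -
    have "X ** A ** X = D ** (P ** (A ** D)) ** P" by (simp add: X_def matrix_mul_assoc)
    also have "\<dots> = D ** P" using AD PE DE by simp
    finally show ?thesis by (simp add: X_def)
  qed
  have AX: "A ** X = P" using AD EP by (simp add: X_def matrix_mul_assoc)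
  have c1: "colsp X \<subseteq> colsp M"
  proof -
    have "X = M ** (mpow G (Suc k) ** P)" by (simp only: X_def D_def matrix_mul_assoc GkM)
    then show ?thesis using colsp_mult by metis
  qed
  have c2: "colsp M \<subseteq> colsp X"
  proof -
    have e1: "X ** mpow A (Suc k) = D ** (P ** M) ** A"
      by (simp only: X_def M_def mpow_Suc2 matrix_mul_assoc)
    have e2: "D ** (P ** M) ** A = mpow G (Suc k) ** (M ** M ** A)"
      using PM by (simp only: D_def matrix_mul_assoc)
    have e3: "M ** M ** A = mpow A (k + Suc k)"
      by (simp only: M_def mpow_add mpow_Suc2 matrix_mul_assoc)
    have e4: "mpow G (Suc k) ** mpow A (k + Suc k) = M"
      using i[of "Suc k"] comm_mpow2[OF G(2), of "Suc k" "k + Suc k"] by simp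
    have "M = X ** mpow A (Suc k)" using e1 e2 e3 e4 by simp
    then show ?thesis using colsp_mult by metis
  qed
  have c3: "colsp (ctrans X) \<subseteq> colsp M"
  proof -
    have "ctrans X = P ** ctrans D" using Ph by (simp only: X_def ctrans_mult)
    also have "\<dots> = M ** (MP M ** ctrans D)" by (simp only: P_def matrix_mul_assoc)
    finally have "ctrans X = M ** (MP M ** ctrans D)" .
    then show ?thesis using colsp_mult by metis
  qed
  have c4: "colsp M \<subseteq> colsp (ctrans X)"
  proof -
    have "P = ctrans X ** ctrans A" using AX Ph ctrans_mult by metis
    then have "M = ctrans X ** (ctrans A ** M)" using PM by (simp add: matrix_mul_assoc)
    then show ?thesis using colsp_mult by metis
  qed
  have cX: "colsp X = colsp M" using c1 c2 by (rule subset_antisym)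
  have cXt: "colsp (ctrans X) = colsp M" using c3 c4 by (rule subset_antisym)
  show ?thesis apply (rule exI[of _ X]) using XAX cX cXt by (simp add: M_def k_def)
qed

lemma cEP_unique:
  fixes A :: "'n::finite cmat"
  assumes "X1 ** A ** X1 = X1" "colsp X1 = S" "colsp (ctrans X1) = S"
    and "X2 ** A ** X2 = X2" "colsp X2 = S" "colsp (ctrans X2) = S"
  shows "X1 = X2"
proof -
  obtain U where U: "X2 = X1 ** U" using colsp_sub[of X2 X1] assms by auto
  obtain V where V: "ctrans X1 = ctrans X2 ** V" using colsp_sub[of "ctrans X1" "ctrans X2"] assms by auto
  have V': "X1 = ctrans V ** X2" using arg_cong[OF V, of ctrans] by (simp add: ctrans_mult)
  have "X1 ** A ** X2 = (X1 ** A ** X1) ** U" unfolding U by (simp only: matrix_mul_assoc)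
  then have "X1 ** A ** X2 = X2" using U assms(1) by simp
  moreover have "X1 ** A ** X2 = ctrans V ** (X2 ** A ** X2)" 
    by (subst (1) V') (simp only: matrix_mul_assoc)
  then have "X1 ** A ** X2 = X1" using V' assms(4) by simp
  ultimately show ?thesis by simp
qed

lemma cEP_props:
  fixes A :: "'n::finite cmat"
  shows "cEP A ** A ** cEP A = cEP A \<and> colsp (cEP A) = colsp (mpow A (ind A)) \<and>
                  colsp (ctrans (cEP A)) = colsp (mpow A (ind A))"
proof -
  have "\<exists>!X. X ** A ** X = X \<and> colsp X = colsp (mpow A (ind A)) \<and>
                  colsp (ctrans X) = colsp (mpow A (ind A))"
    apply (rule ex_ex1I)
     apply (rule cEP_exists)
    apply (rule cEP_unique; assumption?)
     apply blast+
    done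
  then show ?thesis unfolding cEP_def by (rule theI')
qed



lemma WGpow:
  assumes XAX: "X ** A ** X = (X::'n::finite cmat)"
  shows "mpow (X ** X ** A) (Suc j) = mpow X (Suc (Suc j)) ** A"
proof (induction j)
  case 0 then show ?case by simp
next
  case (Suc j)
  have XAX': "Z ** X ** A ** X = Z ** X" for Z using XAX by (metis matrix_mul_assoc)
  have "mpow (X ** X ** A) (Suc (Suc j)) = X ** X ** A ** (mpow X (Suc (Suc j)) ** A)"
    using Suc by simp
  also have "\<dots> = mpow X (Suc (Suc (Suc j))) ** A" by (simp add: matrix_mul_assoc XAX')
  finally show ?case .
qed

theorem theorem4p5:
  fixes A :: "complex^'n^'n" and m :: nat
  assumes "m \<ge> 1"
  shows "wcore A m = mpow (cEP A) (m + 1) ** mpow A m ** Pr (mpow A m)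
    \<and> wcore A m = mpow (WG A) m ** mpow A (m - 1) ** Pr (mpow A m)
    \<and> A ** wcore A m = mpow (cEP A) m ** mpow A m ** Pr (mpow A m)
    \<and> mpow (cEP A) m ** mpow A m ** Pr (mpow A m) = WGj A (m - 1) ** A ** Pr (mpow A m)
    \<and> wcore A m ** A = mpow (cEP A) (m + 1) ** mpow A m ** Pr (mpow A m) ** A
    \<and> wcore A m ** mpow A m = WGj A m ** mpow A m
    \<and> WGj A m ** mpow A m = mpow (cEP A) (m + 1) ** mpow A (2 * m)
    \<and> (\<forall>Y :: complex^'n^'n. Y ** A ** Y = Y \<and> colsp Y = colsp (mpow A (ind A))
          \<longrightarrow> wcore A m = Y ** A ** wcore A m)"
proof -
  obtain m' where m': "m = Suc m'" using assms by (cases m) auto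
  define X where "X = cEP A"
  define M where "M = mpow A (ind A)"
  define P where "P = Pr (mpow A m)"
  have XAX: "X ** A ** X = X" and cX: "colsp X = colsp M"
    using cEP_props[of A] unfolding X_def M_def by auto
  obtain G where G: "M = A ** M ** G" using ind_G[of A] unfolding M_def by auto
  obtain U1 where U1: "X = M ** U1" using colsp_sub[of X M] cX by auto
  obtain U2 where U2: "M = X ** U2" using colsp_sub[of M X] cX by auto
  have XAM: "X ** A ** M = M"
  proof -
    have "X ** A ** M = (X ** A ** X) ** U2" by (subst U2) (simp only: matrix_mul_assoc)
    then show ?thesis using XAX U2 by simp
  qed
  have AXM: "A ** X ** M = M"
  proof -
    have "A ** X ** M = A ** X ** (A ** M ** G)" using G by simp
    also have "\<dots> = A ** (X ** A ** M) ** G" by (simp only: matrix_mul_assoc)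
    also have "\<dots> = M" using XAM G by simp
    finally show ?thesis .
  qed
  have AXX: "A ** X ** X = X"
  proof -
    have "A ** X ** X = A ** X ** (M ** U1)" by (rule arg_cong[where f="\<lambda>Z. A ** X ** Z"], rule U1)
    then have "A ** X ** X = (A ** X ** M) ** U1" by (simp only: matrix_mul_assoc)
    then show ?thesis using AXM U1 by simp
  qed
  have AXX': "Z ** A ** X ** X = Z ** X" for Z using AXX by (metis matrix_mul_assoc)
  have pA: "pen (mpow A m) (MP (mpow A m))" by (rule MP_props)
  have PA: "P ** mpow A m = mpow A m" using pA by (simp add: pen_def P_def Pr_def)
  have wc: "wcore A m = mpow X (m + 1) ** mpow A m ** P"
    by (simp add: wcore_def WGj_def X_def P_def)
  have a: "wcore A m = mpow (cEP A) (m + 1) ** mpow A m ** Pr (mpow A m)"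
    using wc by (simp add: X_def P_def)
  have b: "wcore A m = mpow (WG A) m ** mpow A (m - 1) ** Pr (mpow A m)"
  proof -
    have "mpow (WG A) m = mpow X (Suc m) ** A"
      unfolding m' WG_def WGj_def X_def[symmetric] using WGpow[OF XAX, of m'] by simp
    then have "mpow (WG A) m ** mpow A (m - 1) ** P = mpow X (Suc m) ** (A ** mpow A m') ** P"
      by (simp add: m' matrix_mul_assoc)
    then show ?thesis using wc m' by (simp add: P_def)
  qed
  have c: "A ** wcore A m = mpow X m ** mpow A m ** P"
    unfolding wc unfolding m' by (simp add: matrix_mul_assoc AXX AXX')
  have c2: "mpow X m ** mpow A m ** P = WGj A (m - 1) ** A ** P"
  proof -
    have CC: "Z ** A ** mpow A m' = Z ** mpow A m' ** A" for Z by (metis C_comm matrix_mul_assoc)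
    show ?thesis unfolding WGj_def m' X_def by (simp add: matrix_mul_assoc CC)
  qed
  have d: "wcore A m ** A = mpow (cEP A) (m + 1) ** mpow A m ** Pr (mpow A m) ** A"
    using a by simp
  have e: "wcore A m ** mpow A m = WGj A m ** mpow A m"
    unfolding wcore_def P_def[symmetric] using PA by (simp add: matrix_mul_assoc[symmetric])
  have e2: "WGj A m ** mpow A m = mpow (cEP A) (m + 1) ** mpow A (2 * m)"
    unfolding WGj_def by (simp add: mult_2 mpow_add matrix_mul_assoc)
  have f: "wcore A m = Y ** A ** wcore A m" if Y: "Y ** A ** Y = Y" "colsp Y = colsp M" for Y
  proof -
    obtain V2 where V2: "M = Y ** V2" using colsp_sub[of M Y] Y(2) by auto
    have YAM: "Y ** A ** M = M"
    proof -
      have "Y ** A ** M = (Y ** A ** Y) ** V2" by (subst V2) (simp only: matrix_mul_assoc)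
      then show ?thesis using Y(1) V2 by simp
    qed
    define R where "R = mpow X m ** mpow A m ** P"
    have w: "wcore A m = M ** (U1 ** R)"
      unfolding wc R_def by (simp add: U1[symmetric] matrix_mul_assoc)
    have "Y ** A ** wcore A m = (Y ** A ** M) ** (U1 ** R)"
      unfolding w by (simp only: matrix_mul_assoc)
    then show ?thesis using YAM w by simp
  qed
  show ?thesis using a b c c2 d e e2 f unfolding X_def P_def M_def by auto
qed

end
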